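(* Suppose that $G$ is a group with a finite-index characteristic subgroup $A\cong\mathbb{Z}^m$, and that there is a homomorphism $\operatorname{sgn}\colon G\to\{1,-1\}$ such that for all $g\in G$ and $x\in A$ we have $g^{-1}xg=x^{\operatorname{sgn}(g)}$. Then the group $P_{A,G}$ of automorphisms of $A$ that extend to automorphisms of $G$ has finite index in $\operatorname{Aut}(A)$. *)

theory Defs
  imports "HOL-Algebra.Algebra"
begin

text \<open>The free abelian group Z^m, written multiplicatively as a HOL-Algebra monoid:
  integer vectors indexed by 0..m-1 (zero outside), with componentwise addition.\<close>
definition Zpow :: "nat \<Rightarrow> (nat \<Rightarrow> int) monoid" where
  "Zpow m = \<lparr>carrier = {v. \<forall>i\<ge>m. v i = 0},
             monoid.mult = (\<lambda>v w. (\<lambda>i. v i + w i)),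
             one = (\<lambda>i. 0)\<rparr>"

definition characteristic :: "'a set \<Rightarrow> ('a, 'b) monoid_scheme \<Rightarrow> bool" where
  "characteristic A G \<longleftrightarrow> subgroup A G \<and> (\<forall>\<psi>\<in>auto G. \<psi> ` A = A)"

definition extendable_auts :: "'a set \<Rightarrow> ('a, 'b) monoid_scheme \<Rightarrow> ('a \<Rightarrow> 'a) set" where
  "extendable_auts A G =
     {\<phi> \<in> auto (G\<lparr>carrier := A\<rparr>). \<exists>\<psi>\<in>auto G. \<forall>x\<in>A. \<psi> x = \<phi> x}"

end

theory Submission imports Defs begin

lemma Zpow_simps [simp]:
  "carrier (Zpow m) = {v. \<forall>i\<ge>m. v i = 0}"
  "monoid.mult (Zpow m) v w = (\<lambda>i. v i + w i)"
  "one (Zpow m) = (\<lambda>i. 0)"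
  by (simp_all add: Zpow_def)

locale thm19 = group G for G (structure) +
  fixes A :: "'a set" and m :: nat and sgn :: "'a \<Rightarrow> int" and h :: "'a \<Rightarrow> nat \<Rightarrow> int"
  assumes A_sub: "subgroup A G"
  and fin: "finite (rcosets A)"
  and h_iso: "h \<in> iso (G\<lparr>carrier := A\<rparr>) (Zpow m)"
  and sgn_pm: "\<forall>g\<in>carrier G. sgn g \<in> {1, -1}"
  and sgn_mult: "\<forall>g\<in>carrier G. \<forall>h\<in>carrier G. sgn (g \<otimes> h) = sgn g * sgn h"
  and conj: "\<forall>g\<in>carrier G. \<forall>x\<in>A. inv g \<otimes> x \<otimes> g = x [^] sgn g"
begin

definition hinv where "hinv = inv_into A h"

lemma A_car: "a \<in> A \<Longrightarrow> a \<in> carrier G"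
  by (rule subgroup.mem_carrier[OF A_sub])

lemma A_closed: "a \<in> A \<Longrightarrow> b \<in> A \<Longrightarrow> a \<otimes> b \<in> A" "\<one> \<in> A" "a \<in> A \<Longrightarrow> inv a \<in> A"
  by (rule subgroup.m_closed[OF A_sub], assumption+) (rule subgroup.one_closed[OF A_sub], rule subgroup.m_inv_closed[OF A_sub], assumption)

lemma h_mem: "a \<in> A \<Longrightarrow> h a \<in> carrier (Zpow m)"
  using h_iso by (auto simp: iso_def hom_def Pi_def)

lemma h_mem': "a \<in> A \<Longrightarrow> i \<ge> m \<Longrightarrow> h a i = 0"
  using h_mem by auto

lemma h_mult: "a \<in> A \<Longrightarrow> b \<in> A \<Longrightarrow> h (a \<otimes> b) = (\<lambda>i. h a i + h b i)"
  using h_iso by (auto simp: iso_def hom_def)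

lemma h_bij: "bij_betw h A (carrier (Zpow m))"
  using h_iso by (auto simp: iso_def)

lemma h_inj: "a \<in> A \<Longrightarrow> b \<in> A \<Longrightarrow> h a = h b \<Longrightarrow> a = b"
  using h_bij by (meson bij_betw_def inj_onD)

lemma hinv_mem: "v \<in> carrier (Zpow m) \<Longrightarrow> hinv v \<in> A"
  unfolding hinv_def using h_bij by (metis bij_betw_def inv_into_into)

lemma h_hinv: "v \<in> carrier (Zpow m) \<Longrightarrow> h (hinv v) = v"
  unfolding hinv_def using h_bij by (metis bij_betw_def f_inv_into_f)

lemma hinv_h: "a \<in> A \<Longrightarrow> hinv (h a) = a"
  unfolding hinv_def using h_bij by (metis bij_betw_def inv_into_f_f)

lemma h_one: "h \<one> = (\<lambda>i. 0)"
proof -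
  have "h (\<one> \<otimes> \<one>) = (\<lambda>i. h \<one> i + h \<one> i)" using h_mult A_closed by blast
  then show ?thesis by (auto simp: fun_eq_iff)
qed

lemma h_inv: "a \<in> A \<Longrightarrow> h (inv a) = (\<lambda>i. - h a i)"
proof -
  assume a: "a \<in> A"
  have "h (a \<otimes> inv a) = (\<lambda>i. h a i + h (inv a) i)" using h_mult A_closed a by blast
  then have "\<And>i. h a i + h (inv a) i = 0" using a A_car h_one by (auto simp: fun_eq_iff)
  then show ?thesis by (auto simp: fun_eq_iff intro: eq_neg_iff_add_eq_0[THEN iffD2] simp: add.commute)
qed

lemma pow_A: "a \<in> A \<Longrightarrow> a [^] (n::nat) \<in> A"
  by (induction n) (auto intro: A_closed)

lemma h_pow: "a \<in> A \<Longrightarrow> h (a [^] (n::nat)) = (\<lambda>i. int n * h a i)"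
proof (induction n)
  case 0 then show ?case by (simp add: h_one)
next
  case (Suc n)
  have "a [^] n \<in> A" using Suc.prems pow_A by blast
  then show ?case using Suc h_mult by (simp add: algebra_simps)
qed


lemma ipow_pm: "x \<in> carrier G \<Longrightarrow> s \<in> {1, -1} \<Longrightarrow> x [^] (s::int) = (if s = 1 then x else inv x)"
  by (auto simp: int_pow_neg)

lemma h_ipow: "a \<in> A \<Longrightarrow> s \<in> {1, -1} \<Longrightarrow> h (a [^] (s::int)) = (\<lambda>i. s * h a i)"
  using ipow_pm[OF A_car] h_inv by auto

lemma ipow_A: "a \<in> A \<Longrightarrow> s \<in> {1, -1} \<Longrightarrow> a [^] (s::int) \<in> A"
  using ipow_pm[OF A_car] A_closed by auto

lemma A_comm: "a \<in> A \<Longrightarrow> b \<in> A \<Longrightarrow> a \<otimes> b = b \<otimes> a"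
  by (rule h_inj) (auto simp: h_mult A_closed add.commute)

lemma sgn_one: "sgn \<one> = 1"
  using sgn_mult sgn_pm by force

lemma sgn_A: "a \<in> A \<Longrightarrow> sgn a = 1"
proof (rule ccontr)
  assume a: "a \<in> A" and ne: "sgn a \<noteq> 1"
  then have s: "sgn a = -1" using sgn_pm A_car by auto
  have "inv a \<otimes> a \<otimes> a = a [^] sgn a" using conj a A_car by blast
  then have "a = inv a" using s a A_car by (simp add: int_pow_neg)
  then have "h a = (\<lambda>i. - h a i)" using h_inv[OF a] by metis
  then have "h a = h \<one>" by (auto simp: fun_eq_iff h_one)
  then have "a = \<one>" using h_inj a A_closed by blast
  then show False using ne sgn_one by simp
qed

lemma sgn_inv: "g \<in> carrier G \<Longrightarrow> sgn (inv g) = sgn g"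
proof -
  assume g: "g \<in> carrier G"
  have "sgn (g \<otimes> inv g) = sgn g * sgn (inv g)" using sgn_mult g by blast
  then have "sgn g * sgn (inv g) = 1" using g sgn_one by simp
  then show ?thesis using sgn_pm g by auto
qed

lemma normal_A: "g \<in> carrier G \<Longrightarrow> a \<in> A \<Longrightarrow> g \<otimes> a \<otimes> inv g \<in> A"
proof -
  assume g: "g \<in> carrier G" and a: "a \<in> A"
  have "inv (inv g) \<otimes> a \<otimes> inv g = a [^] sgn (inv g)" using conj[rule_format, of "inv g" a] g a by simp
  then show ?thesis using ipow_A a sgn_pm g by simp
qed

lemma sgn_cong: "x \<in> carrier G \<Longrightarrow> y \<in> carrier G \<Longrightarrow> x \<otimes> inv y \<in> A \<Longrightarrow> sgn x = sgn y"
proof -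
  assume x: "x \<in> carrier G" and y: "y \<in> carrier G" and xy: "x \<otimes> inv y \<in> A"
  have "x = (x \<otimes> inv y) \<otimes> y" using x y by (simp add: m_assoc)
  then have "sgn x = sgn (x \<otimes> inv y) * sgn y" using sgn_mult x y by (metis inv_closed m_closed)
  then show ?thesis using sgn_A xy by simp
qed

definition rep :: "'a set \<Rightarrow> 'a" where "rep C = (SOME t. t \<in> C)"
definition r :: "'a \<Rightarrow> 'a" where "r g = rep (A #> g)"
definition trm :: "'a set \<Rightarrow> 'a \<Rightarrow> nat \<Rightarrow> int" where
  "trm C g i = sgn (rep C \<otimes> g) * h (rep C \<otimes> g \<otimes> inv (r (rep C \<otimes> g))) i"
definition F :: "'a \<Rightarrow> nat \<Rightarrow> int" where
  "F g = (\<lambda>i. \<Sum>C\<in>rcosets A. trm C g i)"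
definition k :: nat where "k = card (rcosets A)"

lemma canc1: "a \<in> carrier G \<Longrightarrow> x \<in> carrier G \<Longrightarrow> a \<otimes> (inv a \<otimes> x) = x"
  by (simp add: m_assoc[symmetric])

lemma canc2: "a \<in> carrier G \<Longrightarrow> x \<in> carrier G \<Longrightarrow> inv a \<otimes> (a \<otimes> x) = x"
  by (simp add: m_assoc[symmetric])

lemma A_sub_car: "A \<subseteq> carrier G"
  using A_car by blast

lemma rep_in:
  assumes C: "C \<in> rcosets A"
  shows "rep C \<in> C" "rep C \<in> carrier G" "A #> rep C = C"
proof -
  obtain x where x: "x \<in> carrier G" "C = A #> x" using C unfolding RCOSETS_def by blast
  have "x \<in> C" using x rcos_self A_sub by blast
  then show rc: "rep C \<in> C" unfolding rep_def by (rule someI)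
  then show "rep C \<in> carrier G" using subgroup.elemrcos_carrier[OF A_sub is_group x(1)] rc x(2) by simp
  show "A #> rep C = C" using repr_independence[of "rep C" A x] rc x A_sub by simp
qed

lemma r_props:
  assumes g: "g \<in> carrier G"
  shows "r g \<in> carrier G" "g \<otimes> inv (r g) \<in> A"
proof -
  have C: "A #> g \<in> rcosets A" using rcosetsI A_sub_car g by blast
  then show rc: "r g \<in> carrier G" unfolding r_def using rep_in by blast
  have "r g \<in> A #> g" unfolding r_def using rep_in C by blast
  then have "r g \<otimes> inv g \<in> A" using subgroup.rcos_module_imp[OF A_sub is_group g] by blast
  then have "inv (r g \<otimes> inv g) \<in> A" using A_closed by blast
  then show "g \<otimes> inv (r g) \<in> A" using g rc by (simp add: inv_mult_group)
qed

lemma cong_r: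
  assumes x: "x \<in> carrier G" and y: "y \<in> carrier G" and xy: "x \<otimes> inv y \<in> A"
  shows "r x = r y"
proof -
  have "x \<in> A #> y" using subgroup.rcos_module_rev[OF A_sub is_group y x xy] .
  then have "A #> y = A #> x" using repr_independence[of x A y] y A_sub by simp
  then show ?thesis unfolding r_def by simp
qed

lemma r_of_rep:
  assumes C: "C \<in> rcosets A" and g: "g \<in> carrier G"
  shows "r (rep C \<otimes> g) = rep (C #> g)"
  unfolding r_def using coset_mult_assoc[OF A_sub_car rep_in(2)[OF C] g] rep_in(3)[OF C] by simp

lemma shift_in: "C \<in> rcosets A \<Longrightarrow> g \<in> carrier G \<Longrightarrow> C #> g \<in> rcosets A"
  unfolding RCOSETS_def using coset_mult_assoc A_sub_car by auto

lemma shift_bij: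
  assumes g: "g \<in> carrier G"
  shows "bij_betw (\<lambda>C. C #> g) (rcosets A) (rcosets A)"
proof (rule bij_betw_byWitness[where f' = "\<lambda>C. C #> inv g"])
  have bk1: "(C #> g) #> inv g = C" if "C \<in> rcosets A" for C
  proof -
    have "C \<subseteq> carrier G" using that subgroup.rcosets_carrier[OF A_sub is_group] by blast
    then show ?thesis using coset_mult_assoc g by simp
  qed
  have bk2: "(C #> inv g) #> g = C" if "C \<in> rcosets A" for C
  proof -
    have "C \<subseteq> carrier G" using that subgroup.rcosets_carrier[OF A_sub is_group] by blast
    then show ?thesis using coset_mult_assoc g by simp
  qed
  show "\<forall>a\<in>rcosets A. (a #> g) #> inv g = a" using bk1 by blast
  show "\<forall>a\<in>rcosets A. (a #> inv g) #> g = a" using bk2 by blast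
  show "(\<lambda>C. C #> g) ` (rcosets A) \<subseteq> rcosets A" using shift_in g by blast
  show "(\<lambda>C. C #> inv g) ` (rcosets A) \<subseteq> rcosets A" using shift_in g by blast
qed

lemma term_mult:
  assumes C: "C \<in> rcosets A" and g1: "g1 \<in> carrier G" and g2: "g2 \<in> carrier G"
  shows "trm C (g1 \<otimes> g2) i = sgn g2 * trm C g1 i + trm (C #> g1) g2 i"
proof -
  define c where "c = rep C"
  have c: "c \<in> carrier G" unfolding c_def using rep_in C by blast
  define d where "d = r (c \<otimes> g1)"
  have d: "d \<in> carrier G" unfolding d_def using r_props c g1 by blast
  have dd: "rep (C #> g1) = d" unfolding d_def c_def using r_of_rep C g1 by simp
  have u: "c \<otimes> g1 \<otimes> inv d \<in> A" unfolding d_def using r_props c g1 by blast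
  define w where "w = r (d \<otimes> g2)"
  have w: "w \<in> carrier G" unfolding w_def using r_props d g2 by blast
  have v: "d \<otimes> g2 \<otimes> inv w \<in> A" unfolding w_def using r_props d g2 by blast
  have e1: "(c \<otimes> (g1 \<otimes> g2)) \<otimes> inv (d \<otimes> g2) = c \<otimes> g1 \<otimes> inv d"
    using c d g1 g2 by (simp add: m_assoc inv_mult_group canc1)
  have rw: "r (c \<otimes> (g1 \<otimes> g2)) = w" unfolding w_def
    using cong_r[of "c \<otimes> (g1 \<otimes> g2)" "d \<otimes> g2"] e1 u c d g1 g2 by simp
  have s1: "sgn (c \<otimes> (g1 \<otimes> g2)) = sgn (d \<otimes> g2)"
    using sgn_cong[of "c \<otimes> (g1 \<otimes> g2)" "d \<otimes> g2"] e1 u c d g1 g2 by simp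
  have s2: "sgn (c \<otimes> (g1 \<otimes> g2)) = sgn (c \<otimes> g1) * sgn g2"
    using sgn_mult c g1 g2 by (metis m_assoc m_closed)
  have e2: "c \<otimes> (g1 \<otimes> g2) \<otimes> inv w = (c \<otimes> g1 \<otimes> inv d) \<otimes> (d \<otimes> g2 \<otimes> inv w)"
    using c d g1 g2 w by (simp add: m_assoc canc2)
  have "trm C (g1 \<otimes> g2) i = sgn (c \<otimes> (g1 \<otimes> g2)) * (h (c \<otimes> g1 \<otimes> inv d) i + h (d \<otimes> g2 \<otimes> inv w) i)"
    unfolding trm_def c_def[symmetric] rw e2 using h_mult u v by simp
  also have "\<dots> = sgn g2 * (sgn (c \<otimes> g1) * h (c \<otimes> g1 \<otimes> inv d) i) + sgn (d \<otimes> g2) * h (d \<otimes> g2 \<otimes> inv w) i"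
    using s1 s2 by (smt (verit) distrib_left mult.commute mult.left_commute)
  also have "\<dots> = sgn g2 * trm C g1 i + trm (C #> g1) g2 i"
    unfolding trm_def dd c_def[symmetric] d_def[symmetric] w_def[symmetric] ..
  finally show ?thesis .
qed

lemma F_mult:
  assumes g1: "g1 \<in> carrier G" and g2: "g2 \<in> carrier G"
  shows "F (g1 \<otimes> g2) = (\<lambda>i. sgn g2 * F g1 i + F g2 i)"
proof
  fix i
  have "F (g1 \<otimes> g2) i = (\<Sum>C\<in>rcosets A. sgn g2 * trm C g1 i + trm (C #> g1) g2 i)"
    unfolding F_def using term_mult g1 g2 by simp
  also have "\<dots> = sgn g2 * F g1 i + (\<Sum>C\<in>rcosets A. trm (C #> g1) g2 i)"
    unfolding F_def by (simp add: sum.distrib sum_distrib_left)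
  also have "(\<Sum>C\<in>rcosets A. trm (C #> g1) g2 i) = F g2 i"
    unfolding F_def using sum.reindex_bij_betw[OF shift_bij[OF g1], of "\<lambda>D. trm D g2 i"] by simp
  finally show "F (g1 \<otimes> g2) i = sgn g2 * F g1 i + F g2 i" by simp
qed

lemma term_A:
  assumes C: "C \<in> rcosets A" and a: "a \<in> A"
  shows "trm C a i = h a i"
proof -
  define c where "c = rep C"
  have c: "c \<in> carrier G" unfolding c_def using rep_in C by blast
  have ac: "a \<in> carrier G" using a A_car by blast
  have n: "c \<otimes> a \<otimes> inv c \<in> A" using normal_A c a by blast
  have rr: "r (c \<otimes> a) = c"
  proof -
    have "r (c \<otimes> a) = r c" using cong_r[of "c \<otimes> a" c] n c ac by simp
    also have "r c = rep (C #> \<one>)" using r_of_rep[OF C, of \<one>] c c_def by simp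
    also have "C #> \<one> = C" using subgroup.rcosets_carrier[OF A_sub is_group C] by simp
    finally show ?thesis unfolding c_def .
  qed
  have sc: "sgn (c \<otimes> a) = sgn c" using sgn_mult c ac sgn_A a by simp
  have cj: "c \<otimes> a \<otimes> inv c = a [^] sgn c"
    using conj[rule_format, of "inv c" a] c a sgn_inv by simp
  have pm: "sgn c \<in> {1, -1}" using sgn_pm c by blast
  have "trm C a i = sgn c * (sgn c * h a i)"
    unfolding trm_def c_def[symmetric] rr sc cj using h_ipow[OF a pm] by simp
  also have "\<dots> = h a i" using pm by auto
  finally show ?thesis .
qed

lemma F_A: "a \<in> A \<Longrightarrow> F a = (\<lambda>i. int k * h a i)"
  unfolding F_def k_def using term_A by simp

lemma F_mem: "g \<in> carrier G \<Longrightarrow> F g \<in> carrier (Zpow m)"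
proof -
  assume g: "g \<in> carrier G"
  have "trm C g i = 0" if "C \<in> rcosets A" "i \<ge> m" for C i
  proof -
    have "rep C \<otimes> g \<in> carrier G" using rep_in that g by blast
    then have "rep C \<otimes> g \<otimes> inv (r (rep C \<otimes> g)) \<in> A" using r_props by blast
    then show ?thesis unfolding trm_def using h_mem' that by simp
  qed
  then show ?thesis unfolding F_def by simp
qed

lemma k_pos: "k > 0"
proof -
  have "A #> \<one> \<in> rcosets A" using rcosetsI A_sub_car by blast
  then show ?thesis unfolding k_def using fin card_gt_0_iff by blast
qed

end

locale ext19 = thm19 +
  fixes \<chi> :: "'a \<Rightarrow> 'a"
  assumes chi_auto: "\<chi> \<in> auto (G\<lparr>carrier := A\<rparr>)"
  and chi_dvd: "\<forall>a\<in>A. \<forall>i. int k dvd h (\<chi> a) i - h a i"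
begin

lemma chi_bij: "bij_betw \<chi> A A"
  using chi_auto by (simp add: auto_def Bij_def)

lemma chi_mem: "a \<in> A \<Longrightarrow> \<chi> a \<in> A"
  using chi_bij bij_betwE by blast

lemma chi_mult: "a \<in> A \<Longrightarrow> b \<in> A \<Longrightarrow> \<chi> (a \<otimes> b) = \<chi> a \<otimes> \<chi> b"
  using chi_auto by (simp add: auto_def hom_def)

lemma chi_one: "\<chi> \<one> = \<one>"
proof -
  have "\<chi> (\<one> \<otimes> \<one>) = \<chi> \<one> \<otimes> \<chi> \<one>" using chi_mult A_closed by blast
  then have "\<chi> \<one> = \<chi> \<one> \<otimes> \<chi> \<one>" by simp
  then show ?thesis using chi_mem A_closed A_car by (metis l_cancel_one')
qed

lemma chi_inj: "a \<in> A \<Longrightarrow> b \<in> A \<Longrightarrow> \<chi> a = \<chi> b \<Longrightarrow> a = b"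
  using chi_bij by (meson bij_betw_def inj_onD)

definition L :: "(nat \<Rightarrow> int) \<Rightarrow> nat \<Rightarrow> int" where "L v = h (\<chi> (hinv v))"

lemma L_mem: "v \<in> carrier (Zpow m) \<Longrightarrow> L v \<in> carrier (Zpow m)"
  unfolding L_def using hinv_mem chi_mem h_mem by blast

lemma L_add:
  assumes v: "v \<in> carrier (Zpow m)" and w: "w \<in> carrier (Zpow m)"
  shows "L (\<lambda>i. v i + w i) = (\<lambda>i. L v i + L w i)"
proof -
  have "(\<lambda>i. v i + w i) = h (hinv v \<otimes> hinv w)"
    using h_mult hinv_mem v w h_hinv by simp
  then have "hinv (\<lambda>i. v i + w i) = hinv v \<otimes> hinv w"
    using hinv_h hinv_mem v w A_closed by simp
  then show ?thesis unfolding L_def using chi_mult hinv_mem v w h_mult chi_mem by simp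
qed

lemma L_zero: "L (\<lambda>i. 0) = (\<lambda>i. 0)"
proof -
  have z: "(\<lambda>i::nat. 0::int) \<in> carrier (Zpow m)" by simp
  have "L (\<lambda>i. 0 + 0) = (\<lambda>i. L (\<lambda>i. 0) i + L (\<lambda>i. 0) i)" using L_add[OF z z] .
  then show ?thesis by (auto simp: fun_eq_iff)
qed

lemma L_neg:
  assumes v: "v \<in> carrier (Zpow m)"
  shows "L (\<lambda>i. - v i) = (\<lambda>i. - L v i)"
proof -
  have nv: "(\<lambda>i. - v i) \<in> carrier (Zpow m)" using v by simp
  have "L (\<lambda>i. v i + - v i) = (\<lambda>i. L v i + L (\<lambda>i. - v i) i)" using L_add[OF v nv] .
  then have "\<And>i. L v i + L (\<lambda>i. - v i) i = 0" using L_zero by (simp add: fun_eq_iff)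
  then show ?thesis by (auto simp: fun_eq_iff) (metis add.commute add_eq_0_iff)
qed

lemma L_smult:
  assumes v: "v \<in> carrier (Zpow m)"
  shows "L (\<lambda>i. int n * v i) = (\<lambda>i. int n * L v i)"
proof (induction n)
  case 0 then show ?case using L_zero by simp
next
  case (Suc n)
  have nv: "(\<lambda>i. int n * v i) \<in> carrier (Zpow m)" using v by simp
  have "L (\<lambda>i. int (Suc n) * v i) = L (\<lambda>i. v i + int n * v i)" by (simp add: algebra_simps)
  also have "\<dots> = (\<lambda>i. L v i + L (\<lambda>i. int n * v i) i)" using L_add[OF v nv] .
  finally show ?case using Suc by (simp add: algebra_simps)
qed

lemma L_dvd: "v \<in> carrier (Zpow m) \<Longrightarrow> int k dvd L v i - v i"
  unfolding L_def using chi_dvd hinv_mem h_hinv by metis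

definition D :: "(nat \<Rightarrow> int) \<Rightarrow> nat \<Rightarrow> int" where
  "D v = (\<lambda>i. (L v i - v i) div int k)"

lemma D_mem: "v \<in> carrier (Zpow m) \<Longrightarrow> D v \<in> carrier (Zpow m)"
  unfolding D_def using L_mem by simp

lemma div_lin:
  assumes "int k dvd x" "int k dvd y" "s \<in> {1, -1}"
  shows "(s * x + y) div int k = s * (x div int k) + y div int k"
proof -
  obtain a where a: "x = int k * a" using assms by blast
  obtain b where b: "y = int k * b" using assms by blast
  have kp: "int k \<noteq> 0" using k_pos by simp
  have "s * x + y = int k * (s * a + b)" using a b by (simp add: algebra_simps)
  then show ?thesis using a b kp by simp
qed

lemma D_lin:
  assumes v: "v \<in> carrier (Zpow m)" and w: "w \<in> carrier (Zpow m)" and s: "s \<in> {1, -1}"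
  shows "D (\<lambda>i. s * v i + w i) = (\<lambda>i. s * D v i + D w i)"
proof -
  have sv: "(\<lambda>i. s * v i) \<in> carrier (Zpow m)" using v by simp
  have Ls: "L (\<lambda>i. s * v i) = (\<lambda>i. s * L v i)"
    using s L_neg[OF v] by auto
  have LL: "L (\<lambda>i. s * v i + w i) = (\<lambda>i. s * L v i + L w i)"
    using L_add[OF sv w] Ls by simp
  show ?thesis
  proof
    fix i
    have "L (\<lambda>i. s * v i + w i) i - (s * v i + w i) = s * (L v i - v i) + (L w i - w i)"
      using LL by (simp add: algebra_simps)
    moreover have "(s * (L v i - v i) + (L w i - w i)) div int k = s * ((L v i - v i) div int k) + (L w i - w i) div int k"
      using div_lin[OF L_dvd[OF v] L_dvd[OF w] s] .
    ultimately show "D (\<lambda>i. s * v i + w i) i = s * D v i + D w i"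
      unfolding D_def by metis
  qed
qed

definition f :: "'a \<Rightarrow> 'a" where "f g = hinv (D (F g))"
definition \<psi> :: "'a \<Rightarrow> 'a" where "\<psi> = (\<lambda>g\<in>carrier G. g \<otimes> f g)"

lemma f_mem: "g \<in> carrier G \<Longrightarrow> f g \<in> A"
  unfolding f_def using hinv_mem D_mem F_mem by blast

lemma h_f: "g \<in> carrier G \<Longrightarrow> h (f g) = D (F g)"
  unfolding f_def using h_hinv D_mem F_mem by blast

lemma f_A: "a \<in> A \<Longrightarrow> f a = inv a \<otimes> \<chi> a"
proof -
  assume a: "a \<in> A"
  have ha: "h a \<in> carrier (Zpow m)" using h_mem a by blast
  have "D (F a) = (\<lambda>i. (int k * L (h a) i - int k * h a i) div int k)"
    unfolding D_def F_A[OF a] L_smult[OF ha] ..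
  also have "\<dots> = (\<lambda>i. L (h a) i - h a i)"
    using k_pos by (simp add: right_diff_distrib[symmetric])
  also have "\<dots> = h (inv a \<otimes> \<chi> a)"
    unfolding L_def using hinv_h a h_mult A_closed chi_mem h_inv by simp
  finally have "D (F a) = h (inv a \<otimes> \<chi> a)" .
  then show ?thesis unfolding f_def using hinv_h A_closed chi_mem a by simp
qed

lemma psi_A: "a \<in> A \<Longrightarrow> \<psi> a = \<chi> a"
  unfolding \<psi>_def using f_A A_car chi_mem by (simp add: m_assoc[symmetric])

lemma f_mult:
  assumes g1: "g1 \<in> carrier G" and g2: "g2 \<in> carrier G"
  shows "f (g1 \<otimes> g2) = f g1 [^] sgn g2 \<otimes> f g2"
proof -
  have s: "sgn g2 \<in> {1, -1}" using sgn_pm g2 by blast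
  have "D (F (g1 \<otimes> g2)) = (\<lambda>i. sgn g2 * D (F g1) i + D (F g2) i)"
    unfolding F_mult[OF g1 g2] using D_lin[OF F_mem[OF g1] F_mem[OF g2] s] .
  also have "\<dots> = h (f g1 [^] sgn g2 \<otimes> f g2)"
    using h_mult ipow_A f_mem g1 g2 s h_ipow h_f by simp
  finally show ?thesis unfolding f_def
    using hinv_h A_closed ipow_A f_mem g1 g2 s by (metis f_def)
qed

lemma psi_mult:
  assumes g1: "g1 \<in> carrier G" and g2: "g2 \<in> carrier G"
  shows "\<psi> (g1 \<otimes> g2) = \<psi> g1 \<otimes> \<psi> g2"
proof -
  have x: "f g1 \<in> carrier G" "f g2 \<in> carrier G" using f_mem A_car g1 g2 by blast+
  have c: "inv g2 \<otimes> f g1 \<otimes> g2 = f g1 [^] sgn g2" using conj f_mem g1 g2 by blast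
  have c2: "f g1 \<otimes> g2 = g2 \<otimes> f g1 [^] sgn g2"
  proof -
    have "g2 \<otimes> (inv g2 \<otimes> f g1 \<otimes> g2) = f g1 \<otimes> g2" using x g2 by (simp add: m_assoc[symmetric])
    then show ?thesis using c by simp
  qed
  have "\<psi> g1 \<otimes> \<psi> g2 = g1 \<otimes> (f g1 \<otimes> g2) \<otimes> f g2" unfolding \<psi>_def using g1 g2 x by (simp add: m_assoc)
  also have "\<dots> = g1 \<otimes> g2 \<otimes> (f g1 [^] sgn g2 \<otimes> f g2)" unfolding c2 using g1 g2 x by (simp add: m_assoc)
  also have "\<dots> = \<psi> (g1 \<otimes> g2)" unfolding \<psi>_def using f_mult g1 g2 by simp
  finally show ?thesis by simp
qed

lemma psi_car: "g \<in> carrier G \<Longrightarrow> \<psi> g \<in> carrier G"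
  unfolding \<psi>_def using f_mem A_car by simp

lemma psi_auto: "\<psi> \<in> auto G"
proof -
  have hom: "\<psi> \<in> hom G G" unfolding hom_def using psi_car psi_mult by auto
  have inj: "inj_on \<psi> (carrier G)"
  proof (rule inj_onI)
    fix x y assume x: "x \<in> carrier G" and y: "y \<in> carrier G" and e: "\<psi> x = \<psi> y"
    define z where "z = x \<otimes> inv y"
    have z: "z \<in> carrier G" unfolding z_def using x y by simp
    have "x = z \<otimes> y" unfolding z_def using x y by (simp add: m_assoc)
    then have "\<psi> x = \<psi> z \<otimes> \<psi> y" using psi_mult z y by simp
    then have pz: "\<psi> z = \<one>" using e psi_car z y by simp
    then have "z \<otimes> f z = \<one>" unfolding \<psi>_def using z by simp
    then have "z = inv (f z)" using inv_equality[of z "f z"] f_mem z A_car by simp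
    then have zA: "z \<in> A" using A_closed f_mem z by metis
    then have "\<chi> z = \<chi> \<one>" using pz psi_A chi_one by simp
    then have "z = \<one>" using chi_inj zA A_closed by blast
    then show "x = y" using \<open>x = z \<otimes> y\<close> y by simp
  qed
  have surj: "\<psi> ` carrier G = carrier G"
  proof
    show "\<psi> ` carrier G \<subseteq> carrier G" using psi_car by blast
    show "carrier G \<subseteq> \<psi> ` carrier G"
    proof
      fix y assume y: "y \<in> carrier G"
      have b: "inv (f y) \<in> A" using f_mem y A_closed by blast
      then obtain a where a: "a \<in> A" "\<chi> a = inv (f y)" using chi_bij by (metis bij_betw_imp_surj_on imageE)
      have "\<psi> (y \<otimes> a) = \<psi> y \<otimes> \<psi> a" using psi_mult y a A_car by blast
      also have "\<dots> = y \<otimes> f y \<otimes> inv (f y)" unfolding psi_A[OF a(1)] a(2) unfolding \<psi>_def using y by simp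
      also have "\<dots> = y" using y f_mem A_car by (simp add: m_assoc)
      finally show "y \<in> \<psi> ` carrier G" using y a A_car by (metis image_eqI m_closed)
    qed
  qed
  have ext: "\<psi> \<in> extensional (carrier G)" unfolding \<psi>_def by simp
  show ?thesis unfolding auto_def Bij_def bij_betw_def using hom inj surj ext by blast
qed

lemma extends: "\<exists>\<Psi>\<in>auto G. \<forall>x\<in>A. \<Psi> x = \<chi> x"
  using psi_auto psi_A by blast

end


context thm19
begin

abbreviation "A' \<equiv> G\<lparr>carrier := A\<rparr>"

lemma grpA: "group A'"
  using subgroup.subgroup_is_group[OF A_sub is_group] .

lemma aut_props:
  assumes p: "p \<in> auto A'"
  shows "bij_betw p A A" "\<And>a. a \<in> A \<Longrightarrow> p a \<in> A"
    "\<And>a b. a \<in> A \<Longrightarrow> b \<in> A \<Longrightarrow> p (a \<otimes> b) = p a \<otimes> p b"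
    "p \<in> extensional A"
  using p by (auto simp: auto_def Bij_def hom_def bij_betw_def)

lemma aut_one: "p \<in> auto A' \<Longrightarrow> p \<one> = \<one>"
proof -
  assume p: "p \<in> auto A'"
  have "p (\<one> \<otimes> \<one>) = p \<one> \<otimes> p \<one>" using aut_props(3)[OF p] A_closed by blast
  then have "p \<one> = p \<one> \<otimes> p \<one>" by simp
  then show ?thesis using aut_props(2)[OF p] A_closed A_car by (metis l_cancel_one')
qed

lemma aut_pow: "p \<in> auto A' \<Longrightarrow> a \<in> A \<Longrightarrow> p (a [^] (n::nat)) = p a [^] n"
proof (induction n)
  case 0 then show ?case using aut_one by simp
next
  case (Suc n) then show ?case using aut_props(3)[OF Suc(2)] pow_A by simp
qed

lemma aut_h: "p \<in> auto A' \<Longrightarrow> a \<in> A \<Longrightarrow> b \<in> A \<Longrightarrow> h (p (a \<otimes> b [^] k)) = (\<lambda>i. h (p a) i + int k * h (p b) i)"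
proof -
  assume p: "p \<in> auto A'" and a: "a \<in> A" and b: "b \<in> A"
  have "p (a \<otimes> b [^] k) = p a \<otimes> p b [^] k"
    using aut_props(3)[OF p a pow_A[OF b]] aut_pow[OF p b] by simp
  moreover have "p a \<in> A" "p b \<in> A" using aut_props(2)[OF p] a b by auto
  ultimately show ?thesis using h_mult pow_A h_pow by simp
qed

definition S :: "(nat \<Rightarrow> int) set" where
  "S = {w. \<forall>i. (i < m \<longrightarrow> 0 \<le> w i \<and> w i < int k) \<and> (m \<le> i \<longrightarrow> w i = 0)}"

lemma S_fin: "finite S"
proof -
  have "S \<subseteq> (\<lambda>u i. if i < m then u i else 0) ` (PiE {..<m} (\<lambda>_. {0..<int k}))"
  proof
    fix w assume w: "w \<in> S"
    have "w = (\<lambda>i. if i < m then restrict w {..<m} i else 0)" using w by (auto simp: S_def fun_eq_iff)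
    moreover have "restrict w {..<m} \<in> PiE {..<m} (\<lambda>_. {0..<int k})" using w by (auto simp: S_def)
    ultimately show "w \<in> (\<lambda>u i. if i < m then u i else 0) ` (PiE {..<m} (\<lambda>_. {0..<int k}))" by blast
  qed
  then show ?thesis by (meson finite_PiE finite_atLeastLessThan_int finite_imageI finite_lessThan finite_subset)
qed

definition kap :: "('a \<Rightarrow> 'a) \<Rightarrow> (nat \<Rightarrow> int) \<Rightarrow> nat \<Rightarrow> int" where
  "kap p = (\<lambda>v\<in>S. \<lambda>i. h (p (hinv v)) i mod int k)"

lemma S_car: "v \<in> S \<Longrightarrow> v \<in> carrier (Zpow m)"
  by (auto simp: S_def)

lemma kap_in: "p \<in> auto A' \<Longrightarrow> kap p \<in> PiE S (\<lambda>_. S)"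
proof -
  assume p: "p \<in> auto A'"
  have "(\<lambda>i. h (p (hinv v)) i mod int k) \<in> S" if "v \<in> S" for v
  proof -
    have "p (hinv v) \<in> A" using aut_props(2)[OF p] hinv_mem S_car that by blast
    then show ?thesis using k_pos h_mem' by (auto simp: S_def)
  qed
  then show ?thesis unfolding kap_def by auto
qed

lemma kap_dvd:
  assumes p1: "p1 \<in> auto A'" and p2: "p2 \<in> auto A'" and e: "kap p1 = kap p2" and a: "a \<in> A"
  shows "int k dvd h (p2 a) i - h (p1 a) i"
proof -
  define v where "v = h a"
  have v: "v \<in> carrier (Zpow m)" unfolding v_def using h_mem a by blast
  define s where "s = (\<lambda>i. v i mod int k)"
  define w where "w = (\<lambda>i. v i div int k)"
  have sS: "s \<in> S" unfolding s_def S_def using v k_pos by auto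
  have wc: "w \<in> carrier (Zpow m)" unfolding w_def using v by auto
  have sA: "hinv s \<in> A" using hinv_mem S_car sS by blast
  have wA: "hinv w \<in> A" using hinv_mem wc by blast
  have "h (hinv s \<otimes> hinv w [^] k) = (\<lambda>i. s i + int k * w i)"
    using h_mult h_pow sA wA pow_A h_hinv S_car sS wc by simp
  also have "\<dots> = h a" unfolding s_def w_def v_def[symmetric] by (simp add: fun_eq_iff)
  finally have aeq: "a = hinv s \<otimes> hinv w [^] k" using h_inj a sA wA pow_A A_closed by metis
  have "kap p1 s i = kap p2 s i" using e by simp
  then have "h (p1 (hinv s)) i mod int k = h (p2 (hinv s)) i mod int k" unfolding kap_def using sS by simp
  then have d: "int k dvd h (p2 (hinv s)) i - h (p1 (hinv s)) i" by (metis mod_eq_dvd_iff)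
  have "h (p2 a) i - h (p1 a) i = (h (p2 (hinv s)) i - h (p1 (hinv s)) i) + int k * (h (p2 (hinv w)) i - h (p1 (hinv w)) i)"
    unfolding aeq using aut_h[OF p1 sA wA] aut_h[OF p2 sA wA] by (simp add: algebra_simps)
  then show ?thesis using d by simp
qed

lemma BijG_mult: "f \<in> Bij A \<Longrightarrow> g \<in> Bij A \<Longrightarrow> f \<otimes>\<^bsub>BijGroup A\<^esub> g = compose A f g"
  by (simp add: BijGroup_def)

lemma Aut_mult: "f \<in> auto A' \<Longrightarrow> g \<in> auto A' \<Longrightarrow> f \<otimes>\<^bsub>AutoGroup A'\<^esub> g = compose A f g"
  by (simp add: AutoGroup_def BijGroup_def auto_def)

lemma auto_compose: "f \<in> auto A' \<Longrightarrow> g \<in> auto A' \<Longrightarrow> compose A f g \<in> auto A'"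
proof -
  assume f: "f \<in> auto A'" and g: "g \<in> auto A'"
  have "f \<otimes>\<^bsub>BijGroup A\<^esub> g \<in> auto A'"
    using subgroup.m_closed[OF group.subgroup_auto[OF grpA]] f g by simp
  then show ?thesis using f g BijG_mult by (simp add: auto_def)
qed

lemma auto_inv: "f \<in> auto A' \<Longrightarrow> restrict (inv_into A f) A \<in> auto A'"
proof -
  assume f: "f \<in> auto A'"
  have "inv\<^bsub>BijGroup A\<^esub> f \<in> auto A'"
    using subgroup.m_inv_closed[OF group.subgroup_auto[OF grpA]] f by simp
  moreover have "f \<in> Bij A" using f by (simp add: auto_def)
  ultimately show ?thesis using inv_BijGroup[of f A] by simp
qed

lemma autoG_compose: "f \<in> auto G \<Longrightarrow> g \<in> auto G \<Longrightarrow> compose (carrier G) f g \<in> auto G"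
proof -
  assume f: "f \<in> auto G" and g: "g \<in> auto G"
  have "f \<otimes>\<^bsub>BijGroup (carrier G)\<^esub> g \<in> auto G"
    using subgroup.m_closed[OF subgroup_auto] f g by simp
  then show ?thesis using f g by (simp add: auto_def BijGroup_def)
qed

lemma coset_sub:
  assumes p1: "p1 \<in> auto A'" and p2: "p2 \<in> auto A'" and e: "kap p1 = kap p2"
  shows "extendable_auts A G #>\<^bsub>AutoGroup A'\<^esub> p2 \<subseteq> extendable_auts A G #>\<^bsub>AutoGroup A'\<^esub> p1"
proof
  define \<chi> where "\<chi> = compose A p2 (restrict (inv_into A p1) A)"
  have chi: "\<chi> \<in> auto A'" unfolding \<chi>_def using auto_compose auto_inv p1 p2 by blast
  have inv1: "\<And>x. x \<in> A \<Longrightarrow> inv_into A p1 (p1 x) = x"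
    using aut_props(1)[OF p1] by (meson bij_betw_imp_inj_on inv_into_f_f)
  have chi_p1: "\<And>x. x \<in> A \<Longrightarrow> \<chi> (p1 x) = p2 x"
    unfolding \<chi>_def using inv1 aut_props(2)[OF p1] by (simp add: compose_def)
  have dv: "\<forall>b\<in>A. \<forall>i. int k dvd h (\<chi> b) i - h b i"
  proof (intro ballI allI)
    fix b i assume b: "b \<in> A"
    obtain a where a: "a \<in> A" "b = p1 a" using aut_props(1)[OF p1] b by (metis bij_betw_imp_surj_on imageE)
    show "int k dvd h (\<chi> b) i - h b i" using kap_dvd[OF p1 p2 e a(1)] chi_p1 a by simp
  qed
  interpret E: ext19 G A m sgn h \<chi>
    by unfold_locales (use chi dv in auto)
  obtain \<Psi> where Psi: "\<Psi> \<in> auto G" "\<forall>x\<in>A. \<Psi> x = \<chi> x" using E.extends by blast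
  fix y assume "y \<in> extendable_auts A G #>\<^bsub>AutoGroup A'\<^esub> p2"
  then obtain p where p: "p \<in> extendable_auts A G" and y: "y = p \<otimes>\<^bsub>AutoGroup A'\<^esub> p2"
    unfolding r_coset_def by blast
  have pa: "p \<in> auto A'" using p unfolding extendable_auts_def by blast
  obtain \<Psi>p where Psip: "\<Psi>p \<in> auto G" "\<forall>x\<in>A. \<Psi>p x = p x" using p unfolding extendable_auts_def by blast
  define p' where "p' = compose A p \<chi>"
  have p'a: "p' \<in> auto A'" unfolding p'_def using auto_compose pa chi by blast
  have "\<forall>x\<in>A. compose (carrier G) \<Psi>p \<Psi> x = p' x"
    using Psi Psip A_car aut_props(2)[OF chi] unfolding p'_def by (simp add: compose_def)
  then have p'P: "p' \<in> extendable_auts A G" unfolding extendable_auts_def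
    using p'a autoG_compose[OF Psip(1) Psi(1)] by blast
  have "p' \<otimes>\<^bsub>AutoGroup A'\<^esub> p1 = compose A p' p1" using Aut_mult p'a p1 by blast
  also have "\<dots> = compose A p p2"
    unfolding p'_def using chi_p1 aut_props(2)[OF p1] by (auto simp: compose_def fun_eq_iff)
  also have "\<dots> = y" unfolding y using Aut_mult pa p2 by simp
  finally show "y \<in> extendable_auts A G #>\<^bsub>AutoGroup A'\<^esub> p1" unfolding r_coset_def using p'P by blast
qed

lemma finite_index: "finite (rcosets\<^bsub>AutoGroup A'\<^esub> extendable_auts A G)"
proof -
  let ?P = "extendable_auts A G"
  define pick where "pick c = (SOME p. p \<in> auto A' \<and> kap p = c)" for c
  have "rcosets\<^bsub>AutoGroup A'\<^esub> ?P \<subseteq> (\<lambda>c. ?P #>\<^bsub>AutoGroup A'\<^esub> pick c) ` (kap ` auto A')"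
  proof
    fix Xc assume "Xc \<in> rcosets\<^bsub>AutoGroup A'\<^esub> ?P"
    then obtain p where p: "p \<in> auto A'" and Xc: "Xc = ?P #>\<^bsub>AutoGroup A'\<^esub> p"
      unfolding RCOSETS_def by (auto simp: AutoGroup_def)
    have "\<exists>q. q \<in> auto A' \<and> kap q = kap p" using p by blast
    then have q: "pick (kap p) \<in> auto A'" "kap (pick (kap p)) = kap p"
      unfolding pick_def by (metis (mono_tags, lifting) someI_ex)+
    have "Xc = ?P #>\<^bsub>AutoGroup A'\<^esub> pick (kap p)"
      unfolding Xc using coset_sub[OF p q(1) q(2)[symmetric]] coset_sub[OF q(1) p q(2)] by blast
    then show "Xc \<in> (\<lambda>c. ?P #>\<^bsub>AutoGroup A'\<^esub> pick c) ` (kap ` auto A')" using p by blast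
  qed
  moreover have "finite (kap ` auto A')"
    using kap_in finite_PiE[OF S_fin, of "\<lambda>_. S"] S_fin by (meson finite_subset image_subsetI)
  ultimately show ?thesis using finite_subset by blast
qed

end

theorem mainTheorem19:
  fixes G (structure) and A :: "'a set" and m :: nat and sgn :: "'a \<Rightarrow> int"
  assumes "group G"
    and "characteristic A G"
    and "finite (rcosets\<^bsub>G\<^esub> A)"
    and "G\<lparr>carrier := A\<rparr> \<cong> Zpow m"
    and "\<forall>g\<in>carrier G. sgn g \<in> {1, -1}"
    and "\<forall>g\<in>carrier G. \<forall>h\<in>carrier G. sgn (g \<otimes> h) = sgn g * sgn h"
    and "\<forall>g\<in>carrier G. \<forall>x\<in>A. inv g \<otimes> x \<otimes> g = x [^] sgn g"
  shows "finite (rcosets\<^bsub>AutoGroup (G\<lparr>carrier := A\<rparr>)\<^esub> extendable_auts A G)"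
proof -
  obtain h where h: "h \<in> iso (G\<lparr>carrier := A\<rparr>) (Zpow m)" using assms(4) unfolding is_iso_def by blast
  have sub: "subgroup A G" using assms(2) unfolding characteristic_def by blast
  interpret T: thm19 G A m sgn h
    using assms(1,3,5,6,7) sub h by (simp add: thm19_def thm19_axioms_def)
  show ?thesis using T.finite_index .
qed

end
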